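(* Let $Z$ be a random variable taking values in $\mathbb{D}$ whose law $\mathrm{d}\Lambda(z)$ is rotationally invariant. Then for fixed $w\in\partial\mathbb{D}$, the random variable \[ |Z|\,\phi_{-|Z|w}\Big(\frac{Z}{|Z|}\Big)=Z\frac{1+\overline{Z}w}{1+Z\overline{w}} \] has law $P_{\mathbb{D}}(z,w)\,\mathrm{d}\Lambda(z)$ on $\mathbb{D}$.
   Context: $P_{\mathbb{D}}(z,e^{i\theta})=\frac{1-|z|^2}{|e^{i\theta}-z|^2}$ is the Poisson kernel of the unit disk. For $z_0\in\mathbb{D}$, $\phi_{z_0}(z)=\frac{z-z_0}{1-\overline{z_0}z}$. *)

theory Defs
  imports "HOL-Probability.Probability"
begin

definition poisson_kernel_disk :: "complex \<Rightarrow> complex \<Rightarrow> real" where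
  "poisson_kernel_disk z \<zeta> = (1 - (cmod z)^2) / (cmod (\<zeta> - z))^2"

definition disk_mobius :: "complex \<Rightarrow> complex \<Rightarrow> complex" where
  "disk_mobius z0 z = (z - z0) / (1 - cnj z0 * z)"

end

theory Submission
  imports Defs
begin




lemma lborel_translate:
  fixes g :: "real \<Rightarrow> ennreal"
  assumes [measurable]: "g \<in> borel_measurable borel"
  shows "(\<integral>\<^sup>+x. g x \<partial>lborel) = (\<integral>\<^sup>+x. g (x + a) \<partial>lborel)"
  using nn_integral_real_affine[of g 1 a] by (simp add: add.commute)

lemma periodic_shift_pos:
  fixes f :: "real \<Rightarrow> ennreal"
  assumes [measurable]: "f \<in> borel_measurable borel" and per: "\<And>x. f (x + 2*pi) = f x"
    and c: "0 \<le> c" "c \<le> 2*pi"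
  shows "(\<integral>\<^sup>+x. f x * indicator {c..c+2*pi} x \<partial>lborel) = (\<integral>\<^sup>+x. f x * indicator {0..2*pi} x \<partial>lborel)"
proof -
  have "(\<integral>\<^sup>+x. f x * indicator {c..c+2*pi} x \<partial>lborel)
      = (\<integral>\<^sup>+x. f x * indicator {c..2*pi} x + f x * indicator {2*pi<..c+2*pi} x \<partial>lborel)"
    using c by (intro nn_integral_cong) (auto simp: indicator_def)
  also have "\<dots> = (\<integral>\<^sup>+x. f x * indicator {c..2*pi} x \<partial>lborel) + (\<integral>\<^sup>+x. f x * indicator {2*pi<..c+2*pi} x \<partial>lborel)"
    by (intro nn_integral_add) auto
  also have "(\<integral>\<^sup>+x. f x * indicator {2*pi<..c+2*pi} x \<partial>lborel) = (\<integral>\<^sup>+x. f (x + 2*pi) * indicator {2*pi<..c+2*pi} (x + 2*pi) \<partial>lborel)"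
    by (rule lborel_translate) auto
  also have "\<dots> = (\<integral>\<^sup>+x. f x * indicator {0<..c} x \<partial>lborel)"
    by (intro nn_integral_cong) (auto simp: per indicator_def)
  also have "(\<integral>\<^sup>+x. f x * indicator {c..2*pi} x \<partial>lborel) + (\<integral>\<^sup>+x. f x * indicator {0<..c} x \<partial>lborel)
      = (\<integral>\<^sup>+x. f x * indicator {c..2*pi} x + f x * indicator {0<..c} x \<partial>lborel)"
    by (intro nn_integral_add[symmetric]) auto
  also have "\<dots> = (\<integral>\<^sup>+x. f x * indicator {0..2*pi} x \<partial>lborel)"
  proof -
    have "AE x in lborel. x \<noteq> 0 \<and> x \<noteq> c"
      using AE_lborel_singleton[of 0] AE_lborel_singleton[of c] by eventually_elim auto
    then show ?thesis
      apply (intro nn_integral_cong_AE)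
      apply (rule eventually_mono, assumption)
      using c by (auto simp: indicator_def)
  qed
  finally show ?thesis .
qed

lemma periodic_shift:
  fixes f :: "real \<Rightarrow> ennreal"
  assumes [measurable]: "f \<in> borel_measurable borel" and per: "\<And>x. f (x + 2*pi) = f x"
    and c: "-2*pi \<le> c" "c \<le> 2*pi"
  shows "(\<integral>\<^sup>+x. f x * indicator {c..c+2*pi} x \<partial>lborel) = (\<integral>\<^sup>+x. f x * indicator {0..2*pi} x \<partial>lborel)"
proof (cases "0 \<le> c")
  case True then show ?thesis using periodic_shift_pos[OF assms(1) per] c by auto
next
  case False
  have "(\<integral>\<^sup>+x. f x * indicator {c+2*pi..c+2*pi+2*pi} x \<partial>lborel)
     = (\<integral>\<^sup>+x. f (x + 2*pi) * indicator {c+2*pi..c+2*pi+2*pi} (x + 2*pi) \<partial>lborel)"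
    by (rule lborel_translate) auto
  also have "\<dots> = (\<integral>\<^sup>+x. f x * indicator {c..c+2*pi} x \<partial>lborel)"
    by (intro nn_integral_cong) (auto simp: per indicator_def)
  finally show ?thesis using periodic_shift_pos[OF assms(1) per, of "c+2*pi"] c False by auto
qed



definition Tm :: "complex \<Rightarrow> complex \<Rightarrow> complex" where
  "Tm w z = z * (1 + cnj z * w) / (1 + z * cnj w)"

lemma cis_2arctan: "cis (2 * arctan x) = (1 + \<i> * of_real x) / (1 - \<i> * of_real x)"
proof -
  have s: "sqrt (1 + x\<^sup>2) > 0" by (simp add: add_pos_nonneg)
  have "cis (arctan x) = (1 + \<i> * of_real x) / of_real (sqrt (1 + x\<^sup>2))"
    by (simp add: complex_eq_iff cos_arctan sin_arctan)
  then have "cis (2 * arctan x) = (1 + \<i> * of_real x)^2 / of_real (1 + x\<^sup>2)"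
  proof -
    have q: "sqrt (1 + x\<^sup>2) * sqrt (1 + x\<^sup>2) = 1 + x\<^sup>2"
      by (simp add: add_nonneg_nonneg)
    have "cis (arctan x) * cis (arctan x) = cis (2 * arctan x)"
      unfolding cis_mult by (simp only: mult_2)
    then have "cis (2 * arctan x) = cis (arctan x) * cis (arctan x)" by (rule sym)
    also have "\<dots> = (1 + \<i> * of_real x) * (1 + \<i> * of_real x) / (of_real (sqrt (1 + x\<^sup>2)) * of_real (sqrt (1 + x\<^sup>2)))"
      unfolding \<open>cis (arctan x) = _\<close> by simp
    also have "of_real (sqrt (1 + x\<^sup>2)) * of_real (sqrt (1 + x\<^sup>2)) = (of_real (1 + x\<^sup>2) :: complex)"
      unfolding of_real_mult[symmetric] q ..
    finally show ?thesis by (simp add: power2_eq_square)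
  qed
  also have "\<dots> = (1 + \<i> * of_real x) / (1 - \<i> * of_real x)"
  proof -
    have ne: "1 - \<i> * of_real x \<noteq> 0" by (simp add: complex_eq_iff)
    have ne2: "(of_real (1 + x\<^sup>2) :: complex) \<noteq> 0" by (metis add_pos_nonneg of_real_eq_0_iff zero_le_power2 zero_less_one order_less_irrefl)
    have "(1 + \<i> * of_real x) * (1 - \<i> * of_real x) = (of_real (1 + x\<^sup>2) :: complex)"
      by (simp add: algebra_simps power2_eq_square)
    then show ?thesis using ne ne2 by (simp add: field_simps power2_eq_square)
  qed
  finally show ?thesis .
qed

lemma Tm_inv:
  assumes w: "cmod w = 1" and u: "cmod u < 1"
  shows "Tm w (u * (1 - cnj u * w) / (1 - u * cnj w)) = u"
proof -
  have ww: "w * cnj w = 1" using complex_norm_square[of w] w by simp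
  define q where "q = u * cnj u"
  have uu: "q = of_real ((cmod u)^2)" using complex_norm_square[of u] q_def by simp
  have D: "1 - u * cnj w \<noteq> 0"
  proof
    assume "1 - u * cnj w = 0" then have "cmod (u * cnj w) = 1" by (metis eq_iff_diff_eq_0 norm_one)
    then show False using u w by (simp add: norm_mult)
  qed
  have N: "1 - cnj u * w \<noteq> 0" using D by (metis complex_cnj_cnj complex_cnj_diff complex_cnj_mult complex_cnj_one complex_cnj_zero)
  have r1: "1 - (cmod u)^2 \<noteq> 0" using u by (smt (verit) norm_ge_zero power2_less_eq_zero_iff power_less_one_iff)
  have r1': "(1 :: complex) - q \<noteq> 0" using r1 unfolding uu
    by (metis of_real_1 of_real_diff of_real_eq_0_iff)
  define v where "v = u * (1 - cnj u * w) / (1 - u * cnj w)"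
  have cv: "cnj v = cnj u * (1 - u * cnj w) / (1 - cnj u * w)" unfolding v_def by simp
  have n1: "(1 - cnj u * w) + cnj u * (1 - u * cnj w) * w = 1 - q"
    unfolding q_def by (simp add: algebra_simps) (metis ww mult.assoc mult.commute mult.left_commute mult_1_right)
  have e1: "1 + cnj v * w = (1 - q) / (1 - cnj u * w)"
    unfolding cv using N n1 by (simp add: divide_simps)
  have n2: "(1 - u * cnj w) + u * (1 - cnj u * w) * cnj w = 1 - q"
    unfolding q_def by (simp add: algebra_simps) (metis ww mult.assoc mult.commute mult.left_commute mult_1_right)
  have e2: "1 + v * cnj w = (1 - q) / (1 - u * cnj w)"
    unfolding v_def using D n2 by (simp add: divide_simps)
  have "Tm w v = v * ((1 - q) / (1 - cnj u * w)) / ((1 - q) / (1 - u * cnj w))"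
    unfolding Tm_def e1 e2 ..
  also have "\<dots> = u" unfolding v_def using D N r1' by (simp add: divide_simps)
  finally show ?thesis unfolding v_def .
qed



definition sig :: "real \<Rightarrow> real \<Rightarrow> real \<Rightarrow> real" where
  "sig r a t = t + 2 * arctan (r * sin (t - a) / (1 - r * cos (t - a)))"

definition sigd :: "real \<Rightarrow> real \<Rightarrow> real \<Rightarrow> real" where
  "sigd r a t = (1 - r\<^sup>2) / (1 - 2 * r * cos (t - a) + r\<^sup>2)"

lemma one_minus_rcos_pos: "(0::real) \<le> r \<Longrightarrow> r < 1 \<Longrightarrow> 1 - r * cos b > 0"
proof -
  assume "0 \<le> r" "r < 1"
  moreover have "cos b \<le> 1" by (rule cos_le_one)
  ultimately have "r * cos b \<le> r" by (simp add: mult_left_le)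
  then show ?thesis using \<open>r < 1\<close> by linarith
qed

lemma den_pos: "(0::real) \<le> r \<Longrightarrow> r < 1 \<Longrightarrow> 1 - 2 * r * cos b + r\<^sup>2 > 0"
proof -
  assume "0 \<le> r" "r < 1"
  moreover have "cos b \<le> 1" by (rule cos_le_one)
  ultimately have "r * cos b \<le> r" by (simp add: mult_left_le)
  then have "1 - 2 * r * cos b + r\<^sup>2 \<ge> (1 - r)\<^sup>2" by (simp add: power2_eq_square algebra_simps)
  moreover have "(1 - r)\<^sup>2 > 0" using \<open>r < 1\<close> by simp
  ultimately show ?thesis by linarith
qed

lemma sig_cis:
  fixes t :: real
  assumes r: "0 \<le> r" "r < 1"
  defines "u \<equiv> complex_of_real r * cis t"
  shows "complex_of_real r * cis (sig r a t) = u * (1 - cnj u * cis a) / (1 - u * cnj (cis a))"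
proof -
  define c where "c = cos (t - a)"
  define s where "s = sin (t - a)"
  have p: "1 - r * c > 0" unfolding c_def using one_minus_rcos_pos[OF r] .
  define x where "x = r * s / (1 - r * c)"
  have cs: "cis (sig r a t) = cis t * ((1 + \<i> * of_real x) / (1 - \<i> * of_real x))"
    unfolding sig_def cis_2arctan[symmetric] x_def c_def s_def by (simp add: cis_mult)
  have "(1 + \<i> * of_real x) / (1 - \<i> * of_real x) = (of_real (1 - r * c) + \<i> * of_real (r * s)) / (of_real (1 - r * c) - \<i> * of_real (r * s))"
  proof -
    have "(of_real (1 - r * c) :: complex) \<noteq> 0" using p by (metis of_real_eq_0_iff less_irrefl)
    then show ?thesis unfolding x_def using p
      by (simp add: divide_simps)
  qed
  also have "of_real (1 - r * c) + \<i> * of_real (r * s) = 1 - cnj u * cis a"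
    unfolding u_def c_def s_def by (simp add: complex_eq_iff cos_diff sin_diff algebra_simps)
  also have "of_real (1 - r * c) - \<i> * of_real (r * s) = 1 - u * cnj (cis a)"
    unfolding u_def c_def s_def by (simp add: complex_eq_iff cos_diff sin_diff algebra_simps)
  finally show ?thesis unfolding cs u_def by simp
qed

lemma sig_deriv:
  assumes r: "0 \<le> r" "r < 1"
  shows "(sig r a has_real_derivative sigd r a t) (at t)"
proof -
  have p: "1 - r * cos (t - a) > 0" using one_minus_rcos_pos[OF r] .
  have d: "1 - 2 * r * cos (t - a) + r\<^sup>2 > 0" using den_pos[OF r] .
  have "(sig r a has_real_derivative
     1 + 2 * (inverse (1 + (r * sin (t - a) / (1 - r * cos (t - a)))\<^sup>2) *
      ((r * cos (t - a) * (1 - r * cos (t - a)) - r * sin (t - a) * (r * sin (t - a))) / (1 - r * cos (t - a))\<^sup>2))) (at t)"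
    unfolding sig_def using p
    by (auto intro!: derivative_eq_intros simp: power2_eq_square algebra_simps)
  moreover have "1 + 2 * (inverse (1 + (r * sin (t - a) / (1 - r * cos (t - a)))\<^sup>2) *
      ((r * cos (t - a) * (1 - r * cos (t - a)) - r * sin (t - a) * (r * sin (t - a))) / (1 - r * cos (t - a))\<^sup>2))
    = sigd r a t"
  proof -
    define c where "c = cos (t - a)"
    define s where "s = sin (t - a)"
    have sc: "s\<^sup>2 + c\<^sup>2 = 1" unfolding s_def c_def by simp
    have p': "1 - r * c \<noteq> 0" using p c_def by simp
    have d': "1 - 2 * r * c + r\<^sup>2 \<noteq> 0" using d c_def by simp
    have e: "(1 - r * c)\<^sup>2 + (r * s)\<^sup>2 = 1 - 2 * r * c + r\<^sup>2"
    proof -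
      have "(1 - r * c)\<^sup>2 + (r * s)\<^sup>2 = 1 - 2 * r * c + r\<^sup>2 * (s\<^sup>2 + c\<^sup>2)"
        by algebra
      then show ?thesis using sc by simp
    qed
    show ?thesis unfolding sigd_def c_def[symmetric] s_def[symmetric]
      using p' d' e sc
      by (simp add: divide_simps power2_eq_square) (simp add: algebra_simps power2_eq_square)
  qed
  ultimately show ?thesis by simp
qed



lemma cnj_meas[measurable]: "cnj \<in> borel_measurable borel"
  by (intro borel_measurable_continuous_onI continuous_intros)

lemma cis_meas[measurable]: "cis \<in> borel_measurable borel"
  by (intro borel_measurable_continuous_onI continuous_intros)

lemma Tm_meas[measurable]: "Tm w \<in> borel_measurable borel"
  unfolding Tm_def by measurable

lemma sig_period: "sig r a (t + 2*pi) = sig r a t + 2*pi"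
proof -
  have "t + 2*pi - a = (t - a) + 2*pi" by simp
  then show ?thesis unfolding sig_def by (simp only: sin_periodic cos_periodic)
qed

lemma sig0_bounds: "-2*pi \<le> sig r a 0" "sig r a 0 \<le> 2*pi"
  unfolding sig_def using arctan_bounded[of "r * sin (0 - a) / (1 - r * cos (0 - a))"] pi_gt_zero
  by linarith+

lemma poisson_sigd:
  assumes r: "0 \<le> r" "r < 1"
  shows "poisson_kernel_disk (complex_of_real r * cis t) (cis a) = sigd r a t"
proof -
  have "(cmod (cis a - complex_of_real r * cis t))\<^sup>2 = 1 - 2 * r * cos (t - a) + r\<^sup>2"
  proof -
    have "(cmod (cis a - complex_of_real r * cis t))\<^sup>2 = (cos a - r * cos t)\<^sup>2 + (sin a - r * sin t)\<^sup>2"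
      by (simp add: cmod_power2)
    also have "\<dots> = ((sin a)\<^sup>2 + (cos a)\<^sup>2) - 2 * r * (cos t * cos a + sin t * sin a) + r\<^sup>2 * ((sin t)\<^sup>2 + (cos t)\<^sup>2)"
      by algebra
    also have "\<dots> = 1 - 2 * r * cos (t - a) + r\<^sup>2"
      by (simp only: sin_cos_squared_add cos_diff)
    finally show ?thesis .
  qed
  moreover have "(cmod (complex_of_real r * cis t))\<^sup>2 = r\<^sup>2" using r by (simp add: norm_mult)
  ultimately show ?thesis unfolding poisson_kernel_disk_def sigd_def by simp
qed

lemma circle_cov:
  fixes f :: "complex \<Rightarrow> ennreal"
  assumes [measurable]: "f \<in> borel_measurable borel" and r: "0 \<le> r" "r < 1"
  shows "(\<integral>\<^sup>+\<theta>. f (Tm (cis a) (complex_of_real r * cis \<theta>)) * indicator {0..2*pi} \<theta> \<partial>lborel)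
       = (\<integral>\<^sup>+\<theta>. f (complex_of_real r * cis \<theta>) * ennreal (poisson_kernel_disk (complex_of_real r * cis \<theta>) (cis a)) * indicator {0..2*pi} \<theta> \<partial>lborel)"
proof -
  define F where "F \<theta> = f (Tm (cis a) (complex_of_real r * cis \<theta>))" for \<theta>
  have Fm[measurable]: "F \<in> borel_measurable borel" unfolding F_def by measurable
  have Fp: "F (x + 2*pi) = F x" for x
    unfolding F_def by (simp add: cis_mult[symmetric])
  have "(\<integral>\<^sup>+\<theta>. F \<theta> * indicator {0..2*pi} \<theta> \<partial>lborel)
      = (\<integral>\<^sup>+\<theta>. F \<theta> * indicator {sig r a 0..sig r a 0 + 2*pi} \<theta> \<partial>lborel)"
    using periodic_shift[OF Fm Fp sig0_bounds] by simp
  also have "\<dots> = (\<integral>\<^sup>+\<theta>. F \<theta> * indicator {sig r a 0..sig r a (2*pi)} \<theta> \<partial>lborel)"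
    using sig_period[of r a 0] by simp
  also have "\<dots> = (\<integral>\<^sup>+t. F (sig r a t) * ennreal (sigd r a t) * indicator {0..2*pi} t \<partial>lborel)"
  proof (rule nn_integral_substitution_aux)
    show "\<And>x. x \<in> {0..2 * pi} \<Longrightarrow> (sig r a has_real_derivative sigd r a x) (at x)"
      using sig_deriv[OF r] by blast
    show "continuous_on {0..2 * pi} (sigd r a)"
      unfolding sigd_def using den_pos[OF r]
      by (intro continuous_intros) (auto simp: less_imp_neq[symmetric] dest: less_imp_neq)
    show "\<And>x. x \<in> {0..2 * pi} \<Longrightarrow> 0 \<le> sigd r a x"
      unfolding sigd_def using den_pos[OF r] r by (auto intro!: divide_nonneg_pos simp: power_le_one abs_square_le_1)
  qed auto
  also have "\<dots> = (\<integral>\<^sup>+t. f (complex_of_real r * cis t) * ennreal (poisson_kernel_disk (complex_of_real r * cis t) (cis a)) * indicator {0..2*pi} t \<partial>lborel)"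
  proof (intro nn_integral_cong)
    fix t
    define u where "u = complex_of_real r * cis t"
    have "F (sig r a t) = f u"
      unfolding F_def sig_cis[OF r] u_def[symmetric]
      by (subst Tm_inv) (auto simp: u_def norm_mult r)
    then show "F (sig r a t) * ennreal (sigd r a t) * indicator {0..2*pi} t =
      f (complex_of_real r * cis t) * ennreal (poisson_kernel_disk (complex_of_real r * cis t) (cis a)) * indicator {0..2*pi} t"
      by (simp add: u_def poisson_sigd[OF r])
  qed
  finally show ?thesis unfolding F_def .
qed


lemma rot_shift:
  fixes G :: "real \<Rightarrow> ennreal"
  assumes [measurable]: "G \<in> borel_measurable borel" and per: "\<And>x. G (x + 2*pi) = G x"
    and t: "-2*pi \<le> t0" "t0 \<le> 2*pi"
  shows "(\<integral>\<^sup>+\<theta>. G (\<theta> + t0) * indicator {0..2*pi} \<theta> \<partial>lborel) = (\<integral>\<^sup>+\<theta>. G \<theta> * indicator {0..2*pi} \<theta> \<partial>lborel)"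
proof -
  have "(\<integral>\<^sup>+x. G x * indicator {t0..t0+2*pi} x \<partial>lborel) = (\<integral>\<^sup>+x. G (x + t0) * indicator {t0..t0+2*pi} (x + t0) \<partial>lborel)"
    by (rule lborel_translate) auto
  also have "\<dots> = (\<integral>\<^sup>+x. G (x + t0) * indicator {0..2*pi} x \<partial>lborel)"
    by (intro nn_integral_cong) (auto simp: indicator_def)
  finally show ?thesis using periodic_shift[OF assms(1) per t] by simp
qed

lemma disk_cov:
  fixes f :: "complex \<Rightarrow> ennreal"
  assumes [measurable]: "f \<in> borel_measurable borel" and z: "cmod z < 1" and w: "cmod w = 1"
  shows "(\<integral>\<^sup>+\<theta>. f (Tm w (cis \<theta> * z)) * indicator {0..2*pi} \<theta> \<partial>lborel)
       = (\<integral>\<^sup>+\<theta>. f (cis \<theta> * z) * ennreal (poisson_kernel_disk (cis \<theta> * z) w) * indicator {0..2*pi} \<theta> \<partial>lborel)"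
proof -
  define a where "a = Arg w"
  have w0: "w \<noteq> 0" using w by auto
  have wa: "w = cis a" unfolding a_def using w w0 cis_Arg[of w] by (simp add: sgn_div_norm)
  define r where "r = cmod z"
  define t0 where "t0 = Arg z"
  have r: "0 \<le> r" "r < 1" using z by (auto simp: r_def)
  have t0: "-2*pi \<le> t0" "t0 \<le> 2*pi" using Arg_bounded[of z] pi_gt_zero unfolding t0_def by linarith+
  have zz: "cis \<theta> * z = complex_of_real r * cis (\<theta> + t0)" for \<theta>
    using rcis_cmod_Arg[of z] unfolding r_def t0_def rcis_def
    by (metis cis_mult mult.left_commute)
  define G1 where "G1 \<theta> = f (Tm w (complex_of_real r * cis \<theta>))" for \<theta>
  define G2 where "G2 \<theta> = f (complex_of_real r * cis \<theta>) * ennreal (poisson_kernel_disk (complex_of_real r * cis \<theta>) w)" for \<theta>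
  have [measurable]: "G1 \<in> borel_measurable borel" "G2 \<in> borel_measurable borel"
    unfolding G1_def G2_def poisson_kernel_disk_def by measurable
  have p1: "G1 (x + 2*pi) = G1 x" for x unfolding G1_def by (simp add: cis_mult[symmetric])
  have p2: "G2 (x + 2*pi) = G2 x" for x unfolding G2_def by (simp add: cis_mult[symmetric])
  have "(\<integral>\<^sup>+\<theta>. f (Tm w (cis \<theta> * z)) * indicator {0..2*pi} \<theta> \<partial>lborel) = (\<integral>\<^sup>+\<theta>. G1 (\<theta> + t0) * indicator {0..2*pi} \<theta> \<partial>lborel)"
    unfolding zz G1_def ..
  also have "\<dots> = (\<integral>\<^sup>+\<theta>. G1 \<theta> * indicator {0..2*pi} \<theta> \<partial>lborel)"
    using rot_shift[of G1 t0] p1 t0 by simp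
  also have "\<dots> = (\<integral>\<^sup>+\<theta>. G2 \<theta> * indicator {0..2*pi} \<theta> \<partial>lborel)"
    unfolding G1_def G2_def wa using circle_cov[OF assms(1) r, of a] by simp
  also have "\<dots> = (\<integral>\<^sup>+\<theta>. G2 (\<theta> + t0) * indicator {0..2*pi} \<theta> \<partial>lborel)"
    using rot_shift[of G2 t0] p2 t0 by simp
  also have "\<dots> = (\<integral>\<^sup>+\<theta>. f (cis \<theta> * z) * ennreal (poisson_kernel_disk (cis \<theta> * z) w) * indicator {0..2*pi} \<theta> \<partial>lborel)"
    unfolding zz G2_def ..
  finally show ?thesis .
qed

lemma avg:
  fixes \<mu> :: "complex measure" and g :: "complex \<Rightarrow> ennreal"
  assumes P: "prob_space \<mu>" and S: "sets \<mu> = sets borel"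
    and R: "\<And>\<theta>. distr \<mu> borel (\<lambda>z. cis \<theta> * z) = \<mu>" and g[measurable]: "g \<in> borel_measurable borel"
  shows "ennreal (2*pi) * (\<integral>\<^sup>+z. g z \<partial>\<mu>) = (\<integral>\<^sup>+z. (\<integral>\<^sup>+\<theta>. g (cis \<theta> * z) * indicator {0..2*pi} \<theta> \<partial>lborel) \<partial>\<mu>)"
proof -
  interpret prob_space \<mu> by (rule P)
  interpret pair_sigma_finite \<mu> lborel
    by (simp add: pair_sigma_finite_def sigma_finite_measure_axioms lborel.sigma_finite_measure_axioms)
  have [measurable_cong]: "sets \<mu> = sets borel" by (rule S)
  have eq: "(\<integral>\<^sup>+z. g (cis \<theta> * z) \<partial>\<mu>) = (\<integral>\<^sup>+z. g z \<partial>\<mu>)" for \<theta>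
  proof -
    have "(\<integral>\<^sup>+z. g z \<partial>\<mu>) = (\<integral>\<^sup>+z. g z \<partial>(distr \<mu> borel (\<lambda>z. cis \<theta> * z)))" using R[of \<theta>] by simp
    also have "\<dots> = (\<integral>\<^sup>+z. g (cis \<theta> * z) \<partial>\<mu>)" by (rule nn_integral_distr) measurable
    finally show ?thesis by simp
  qed
  have "(\<integral>\<^sup>+z. (\<integral>\<^sup>+\<theta>. g (cis \<theta> * z) * indicator {0..2*pi} \<theta> \<partial>lborel) \<partial>\<mu>)
      = (\<integral>\<^sup>+\<theta>. (\<integral>\<^sup>+z. g (cis \<theta> * z) * indicator {0..2*pi} \<theta> \<partial>\<mu>) \<partial>lborel)"
    by (rule Fubini'[symmetric]) measurable
  also have "\<dots> = (\<integral>\<^sup>+\<theta>. (\<integral>\<^sup>+z. g z \<partial>\<mu>) * indicator {0..2*pi} \<theta> \<partial>lborel)"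
    by (intro nn_integral_cong) (simp add: nn_integral_multc eq)
  also have "\<dots> = (\<integral>\<^sup>+z. g z \<partial>\<mu>) * ennreal (2*pi)"
    by (subst nn_integral_cmult_indicator) auto
  finally show ?thesis by (simp add: mult.commute)
qed

theorem mainTheorem12:
  fixes M :: "'a measure" and Z :: "'a \<Rightarrow> complex" and w :: complex
  assumes "prob_space M"
    and "Z \<in> borel_measurable M"
    and "\<And>\<omega>. \<omega> \<in> space M \<Longrightarrow> Z \<omega> \<in> ball 0 1"
    and "\<And>\<theta>::real. distr M borel (\<lambda>\<omega>. cis \<theta> * Z \<omega>) = distr M borel Z"
    and "cmod w = 1"
  shows "(\<forall>z \<in> ball 0 1 - {0}.
            complex_of_real (cmod z) * disk_mobius (- (complex_of_real (cmod z) * w)) (z / complex_of_real (cmod z))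
              = z * (1 + cnj z * w) / (1 + z * cnj w))
         \<and> distr M borel (\<lambda>\<omega>. Z \<omega> * (1 + cnj (Z \<omega>) * w) / (1 + Z \<omega> * cnj w))
             = density (distr M borel Z) (\<lambda>z. ennreal (poisson_kernel_disk z w))"
proof (intro conjI ballI)
  fix z :: complex assume z: "z \<in> ball 0 1 - {0}"
  define r where "r = cmod z"
  have r0: "complex_of_real r \<noteq> 0" using z by (simp add: r_def)
  have rr: "complex_of_real r * complex_of_real r = z * cnj z"
    unfolding r_def using complex_norm_square[of z] by (simp add: power2_eq_square)
  have ww: "w * cnj w = 1" using complex_norm_square[of w] assms(5) by simp
  have D: "1 + z * cnj w \<noteq> 0"
  proof
    assume "1 + z * cnj w = 0" then have "z * cnj w = -1" by (simp add: add_eq_0_iff)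
    then have "cmod (z * cnj w) = 1" by simp
    then show False using z assms(5) by (simp add: norm_mult)
  qed
  have "complex_of_real r * disk_mobius (- (complex_of_real r * w)) (z / complex_of_real r)
      = (z + complex_of_real r * complex_of_real r * w) / (1 + z * cnj w)"
  proof -
    have n: "z / complex_of_real r - - (complex_of_real r * w) = (z + complex_of_real r * complex_of_real r * w) / complex_of_real r"
      using r0 by (simp add: divide_simps)
    have d: "1 - cnj (- (complex_of_real r * w)) * (z / complex_of_real r) = 1 + z * cnj w"
      using r0 by simp
    show ?thesis unfolding disk_mobius_def n d using r0 by simp
  qed
  also have "\<dots> = z * (1 + cnj z * w) / (1 + z * cnj w)" unfolding rr by (simp add: algebra_simps)
  finally show "complex_of_real (cmod z) * disk_mobius (- (complex_of_real (cmod z) * w)) (z / complex_of_real (cmod z))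
              = z * (1 + cnj z * w) / (1 + z * cnj w)" unfolding r_def .
next
  interpret M: prob_space M by (rule assms(1))
  have Zm[measurable]: "Z \<in> borel_measurable M" by (rule assms(2))
  define \<mu> where "\<mu> = distr M borel Z"
  have P: "prob_space \<mu>" unfolding \<mu>_def by (rule M.prob_space_distr) measurable
  have S: "sets \<mu> = sets borel" by (simp add: \<mu>_def)
  have R: "distr \<mu> borel (\<lambda>z. cis \<theta> * z) = \<mu>" for \<theta>
    unfolding \<mu>_def by (subst distr_distr) (auto simp: comp_def assms(4))
  have AE: "AE z in \<mu>. cmod z < 1"
    unfolding \<mu>_def by (subst AE_distr_iff) (auto intro!: AE_I2 dest: assms(3))
  define Pk where "Pk z = ennreal (poisson_kernel_disk z w)" for z
  have Pkm[measurable]: "Pk \<in> borel_measurable borel" unfolding Pk_def poisson_kernel_disk_def by measurable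
  have fn: "(\<lambda>\<omega>. Z \<omega> * (1 + cnj (Z \<omega>) * w) / (1 + Z \<omega> * cnj w)) = Tm w \<circ> Z"
    by (auto simp: Tm_def fun_eq_iff)
  have "distr M borel (Tm w \<circ> Z) = distr \<mu> borel (Tm w)" unfolding \<mu>_def by (subst distr_distr) auto
  moreover have "distr \<mu> borel (Tm w) = density \<mu> Pk"
  proof (rule measure_eqI)
    show "sets (distr \<mu> borel (Tm w)) = sets (density \<mu> Pk)" by (simp add: S)
  next
    fix A assume "A \<in> sets (distr \<mu> borel (Tm w))"
    then have A[measurable]: "A \<in> sets borel" by simp
    have [measurable_cong]: "sets \<mu> = sets borel" by (rule S)
    have e1: "emeasure (distr \<mu> borel (Tm w)) A = (\<integral>\<^sup>+z. indicator A (Tm w z) \<partial>\<mu>)"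
      by (subst emeasure_distr) (auto simp: nn_integral_indicator[symmetric] S intro!: nn_integral_cong simp: indicator_def)
    have e2: "emeasure (density \<mu> Pk) A = (\<integral>\<^sup>+z. indicator A z * Pk z \<partial>\<mu>)"
      by (subst emeasure_density) (auto simp: S mult.commute)
    have "ennreal (2*pi) * (\<integral>\<^sup>+z. indicator A (Tm w z) \<partial>\<mu>)
        = (\<integral>\<^sup>+z. (\<integral>\<^sup>+\<theta>. indicator A (Tm w (cis \<theta> * z)) * indicator {0..2*pi} \<theta> \<partial>lborel) \<partial>\<mu>)"
      by (rule avg[OF P S R, of "\<lambda>z. indicator A (Tm w z)"]) measurable
    also have "\<dots> = (\<integral>\<^sup>+z. (\<integral>\<^sup>+\<theta>. indicator A (cis \<theta> * z) * Pk (cis \<theta> * z) * indicator {0..2*pi} \<theta> \<partial>lborel) \<partial>\<mu>)"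
      apply (rule nn_integral_cong_AE)
      apply (rule eventually_mono[OF AE])
      using disk_cov[OF borel_measurable_indicator[OF A] _ assms(5)] by (simp add: Pk_def)
    also have "\<dots> = ennreal (2*pi) * (\<integral>\<^sup>+z. indicator A z * Pk z \<partial>\<mu>)"
      by (rule avg[OF P S R, of "\<lambda>z. indicator A z * Pk z", symmetric]) measurable
    finally have "(\<integral>\<^sup>+z. indicator A (Tm w z) \<partial>\<mu>) = (\<integral>\<^sup>+z. indicator A z * Pk z \<partial>\<mu>)"
      by (simp add: ennreal_mult_cancel_left)
    then show "emeasure (distr \<mu> borel (Tm w)) A = emeasure (density \<mu> Pk) A" using e1 e2 by simp
  qed
  ultimately show "distr M borel (\<lambda>\<omega>. Z \<omega> * (1 + cnj (Z \<omega>) * w) / (1 + Z \<omega> * cnj w))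
             = density (distr M borel Z) (\<lambda>z. ennreal (poisson_kernel_disk z w))"
    unfolding fn \<mu>_def Pk_def[abs_def] by simp
qed

end
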